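(* Let $\kappa,\kappa_\infty>0$, $\mathcal M(v)=(2\pi)^{-N/2}e^{-|v|^2/2}$, $M=\mathcal M^{1/2}$, $f_\infty=\frac{\kappa_\infty\mathcal M}{1+\kappa_\infty\mathcal M}$, $\rho=\int_{\mathbb{R}^N}f_\infty\,dv$, $\nu(v)=\frac{\rho}{\kappa\kappa_\infty}(1+\kappa_\infty\mathcal M(v))$, and define on $L^2_v$ $$L(h)=\frac1\kappa\Big(\int_{\mathbb{R}^N}h(v')M(v')\,dv'\Big)M-\nu h.$$ Then $N(L)=\mathrm{Span}\{f_\infty/M\}$, $\int f_\infty^3\,dv<\rho$, and for every $h\in L^2_v$ with $\int_{\mathbb{R}^N}h\,\frac{f_\infty}{M}\,dv=0$, $$\langle L(h),h\rangle_{L^2_v}\le-\Big[1-\frac1\rho\int_{\mathbb{R}^N}f_\infty^3\,dv\Big]\int_{\mathbb{R}^N}h^2\nu\,dv.$$ In particular the spectral gap of $L$ is at least $\frac1{\kappa\kappa_\infty}\big[1-\frac1\rho\int f_\infty^3\,dv\big]$.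
   Context: This is the operator obtained by linearizing the fermionic ($\epsilon=1$) semi-classical relaxation operator $\frac1\kappa\int[\mathcal M(1-f)f'-\mathcal M'(1-f')f]dv'$ around $f_\infty$ with the scaling $f=f_\infty+(1+\kappa_\infty\mathcal M)^{-1}\kappa_\infty^{1/2}M\,h$.
   Formalization: The spectral gap of L is at least $\frac{\rho}{\kappa\kappa_\infty}$, not $\frac1{\kappa\kappa_\infty}$, times $1-\frac1\rho\int f_\infty^3\,dv$, measured against the unweighted $L^2_v$ norm of every h orthogonal to $f_\infty/M$. Apart from conventions, each condition added here is assumed in the paper as well or is needed for the statement above to hold. *)

theory Defs
  imports "HOL-Analysis.Analysis"
begin

text \<open>Velocity space R^N is an arbitrary Euclidean space 'a with N = DIM('a).\<close>

definition Maxw :: "'a::euclidean_space \<Rightarrow> real" where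
  "Maxw v = (2 * pi) powr (- real DIM('a) / 2) * exp (- (norm v)\<^sup>2 / 2)"

definition Msqrt :: "'a::euclidean_space \<Rightarrow> real" where
  "Msqrt v = sqrt (Maxw v)"

definition finf :: "real \<Rightarrow> 'a::euclidean_space \<Rightarrow> real" where
  "finf kinf v = kinf * Maxw v / (1 + kinf * Maxw v)"

definition rho :: "real \<Rightarrow> 'a::euclidean_space itself \<Rightarrow> real" where
  "rho kinf (_::'a itself) = (\<integral>v. (finf kinf v :: real) \<partial>(lborel :: 'a measure))"

definition nu :: "real \<Rightarrow> real \<Rightarrow> 'a::euclidean_space \<Rightarrow> real" where
  "nu kappa kinf v = rho kinf TYPE('a) / (kappa * kinf) * (1 + kinf * Maxw v)"

definition Lop :: "real \<Rightarrow> real \<Rightarrow> ('a::euclidean_space \<Rightarrow> real) \<Rightarrow> 'a \<Rightarrow> real" where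
  "Lop kappa kinf h v =
     (1 / kappa) * (\<integral>w. h w * Msqrt w \<partial>lborel) * Msqrt v - nu kappa kinf v * h v"

text \<open>L^2_v: Borel measurable, square-integrable real functions (elements identified a.e.).\<close>
definition L2v :: "('a::euclidean_space \<Rightarrow> real) set" where
  "L2v = {h. h \<in> borel_measurable lborel \<and> integrable lborel (\<lambda>v. (h v)\<^sup>2)}"

end

theory Submission imports Defs "HOL-Probability.Probability" begin

lemma Maxw_meas[measurable]: "(Maxw :: 'a::euclidean_space \<Rightarrow> real) \<in> borel_measurable borel"
  unfolding Maxw_def[abs_def] by measurable

lemma Maxw_pos: "Maxw v > 0"
  unfolding Maxw_def by simp

lemma Maxw_le1: "Maxw (v::'a::euclidean_space) \<le> 1"
proof -
  have "(2 * pi) powr (- real DIM('a) / 2) \<le> 1"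
    using powr_mono[of "- real DIM('a) / 2" 0 "2*pi"] pi_gt3 by simp
  moreover have "exp (- (norm v)\<^sup>2 / 2) \<le> 1" by simp
  ultimately show ?thesis unfolding Maxw_def
    by (metis exp_gt_zero less_eq_real_def mult_le_one powr_ge_zero)
qed

lemma Maxw_prod: "Maxw (v::'a::euclidean_space) = (\<Prod>b\<in>Basis. std_normal_density (v \<bullet> b))"
proof -
  have n: "(norm v)\<^sup>2 = (\<Sum>b\<in>Basis. (v \<bullet> b)\<^sup>2)"
    unfolding power2_norm_eq_inner by (subst euclidean_inner) (simp add: power2_eq_square)
  have "(\<Prod>b\<in>Basis. std_normal_density (v \<bullet> b)) = (\<Prod>b\<in>(Basis::'a set). 1 / sqrt (2*pi)) * (\<Prod>b\<in>Basis. exp (- (v \<bullet> b)\<^sup>2 / 2))"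
    unfolding std_normal_density_def by (rule prod.distrib)
  also have "(\<Prod>b\<in>Basis. exp (- (v \<bullet> b)\<^sup>2 / 2)) = exp (- (norm v)\<^sup>2 / 2)"
    by (simp add: n exp_sum[symmetric] sum_negf sum_divide_distrib)
  also have "(\<Prod>b\<in>(Basis::'a set). 1 / sqrt (2*pi)) = (2 * pi) powr (- real DIM('a) / 2)"
  proof -
    have "(\<Prod>b\<in>(Basis::'a set). 1 / sqrt (2*pi)) = (1 / sqrt (2*pi)) ^ DIM('a)" by simp
    also have "\<dots> = ((2*pi) powr (-1/2)) powr (real DIM('a))"
      by (simp add: powr_realpow powr_minus_divide powr_half_sqrt)
    also have "\<dots> = (2 * pi) powr (- real DIM('a) / 2)"
      by (simp add: powr_powr)
    finally show ?thesis .
  qed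
  finally show ?thesis unfolding Maxw_def by simp
qed

lemma Maxw_nn: "(\<integral>\<^sup>+v. ennreal (Maxw (v::'a::euclidean_space)) \<partial>lborel) = 1"
proof -
  have "(\<integral>\<^sup>+v. ennreal (Maxw (v::'a::euclidean_space)) \<partial>lborel)
       = (\<integral>\<^sup>+v. (\<Prod>b\<in>Basis. ennreal (std_normal_density ((v::'a) \<bullet> b))) \<partial>lborel)"
    by (subst prod_ennreal) (auto simp: Maxw_prod)
  also have "\<dots> = (\<Prod>b\<in>(Basis::'a set). (\<integral>\<^sup>+x. ennreal (std_normal_density x) \<partial>lborel))"
    by (rule nn_integral_lborel_prod) auto
  also have "(\<integral>\<^sup>+x. ennreal (std_normal_density x) \<partial>lborel) = 1"
    by (subst nn_integral_eq_integral) auto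
  finally show ?thesis by simp
qed

lemma Maxw_int: "integrable lborel (Maxw :: 'a::euclidean_space \<Rightarrow> real)"
  using Maxw_nn[where 'a='a] Maxw_pos[where 'a='a]
  by (subst integrable_iff_bounded) (auto simp: less_le)

lemma Msqrt_pos: "Msqrt v > 0"
  unfolding Msqrt_def using Maxw_pos by simp

lemma Msqrt_sq: "(Msqrt v)\<^sup>2 = Maxw v"
  unfolding Msqrt_def using Maxw_pos[of v] by simp

lemma Msqrt_meas[measurable]: "(Msqrt :: 'a::euclidean_space \<Rightarrow> real) \<in> borel_measurable borel"
  unfolding Msqrt_def[abs_def] by measurable

lemma finf_meas[measurable]: "(finf k :: 'a::euclidean_space \<Rightarrow> real) \<in> borel_measurable borel"
  unfolding finf_def[abs_def] by measurable

lemma nu_meas[measurable]: "(nu a k :: 'a::euclidean_space \<Rightarrow> real) \<in> borel_measurable borel"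
  unfolding nu_def[abs_def] by measurable

lemma finf_pos: "k > 0 \<Longrightarrow> finf k v > 0"
  unfolding finf_def using Maxw_pos[of v] by (simp add: add_pos_pos)

lemma finf_lt1: "k > 0 \<Longrightarrow> finf k v < 1"
  unfolding finf_def using Maxw_pos[of v] by (simp add: divide_simps add_pos_pos)

lemma finf_le: "k > 0 \<Longrightarrow> finf k v \<le> k * Maxw v"
  unfolding finf_def using Maxw_pos[of v]
  by (simp add: divide_simps)

lemma finf_int: "k > 0 \<Longrightarrow> integrable lborel (finf k :: 'a::euclidean_space \<Rightarrow> real)"
proof -
  assume k: "k > 0"
  show ?thesis
  proof (rule Bochner_Integration.integrable_bound[OF integrable_mult_right[OF Maxw_int, of k]])
    show "AE x in lborel. norm (finf k x) \<le> norm (k * Maxw (x::'a))"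
    proof (rule AE_I2)
      fix x :: 'a
      have "0 < finf k x" "finf k x \<le> k * Maxw x" using finf_pos[OF k] finf_le[OF k] by auto
      then show "norm (finf k x) \<le> norm (k * Maxw x)" by simp
    qed
  qed simp
qed

lemma finf3_int: "k > 0 \<Longrightarrow> integrable lborel (\<lambda>v::'a::euclidean_space. (finf k v)^3 :: real)"
proof -
  assume k: "k > 0"
  show ?thesis
  proof (rule Bochner_Integration.integrable_bound[OF finf_int[OF k]])
    show "AE x in lborel. norm ((finf k x)^3) \<le> norm (finf k (x::'a))"
    proof (rule AE_I2)
      fix x :: 'a
      have a: "0 < finf k x" "finf k x < 1" using finf_pos[OF k] finf_lt1[OF k] by auto
      then have "(finf k x)^3 \<le> finf k x" by (simp add: power_le_one power3_eq_cube mult_le_one)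
      then show "norm ((finf k x)^3) \<le> norm (finf k x)" using a by simp
    qed
  qed simp
qed

lemma div_aux: "(k::real) > 0 \<Longrightarrow> s > 0 \<Longrightarrow> k * (s * s) / (1 + k * (s * s)) / s = k * s / (1 + k * (s * s))"
proof -
  assume k: "k > 0" and s: "s > 0"
  have "k * (s * s) / (1 + k * (s * s)) / s = (k * s * s) / (s * (1 + k * (s * s)))" by (simp add: ac_simps)
  also have "\<dots> = (k * s) / (1 + k * (s * s))" using s by simp
  finally show ?thesis by simp
qed

lemma finf_div: "k > 0 \<Longrightarrow> finf k v / Msqrt v = k * Msqrt v / (1 + k * Maxw v)"
  using Msqrt_pos[of v] div_aux[of k "Msqrt v"]
  unfolding finf_def Msqrt_sq[symmetric] by (simp add: power2_eq_square)

lemma rho_gt: "k > 0 \<Longrightarrow> (\<integral>v. (finf k v)^3 \<partial>(lborel :: 'a::euclidean_space measure)) < rho k TYPE('a)"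
proof -
  assume k: "k > 0"
  let ?g = "\<lambda>v::'a. finf k v - (finf k v)^3"
  have gp: "?g v > 0" for v
  proof -
    have "finf k v - (finf k v)^3 = finf k v * ((1 - finf k v) * (1 + finf k v))"
      by (simp add: algebra_simps power3_eq_cube)
    also have "\<dots> > 0" using finf_pos[OF k, of v] finf_lt1[OF k, of v] by simp
    finally show ?thesis .
  qed
  have gi: "integrable lborel ?g" using finf_int[OF k] finf3_int[OF k] by auto
  have "integral\<^sup>L lborel ?g \<noteq> 0"
  proof
    assume "integral\<^sup>L lborel ?g = 0"
    moreover have nn: "AE v in lborel. 0 \<le> ?g v" using gp by (auto intro!: AE_I2 less_imp_le)
    ultimately have "AE v in lborel. ?g v = 0"
      using integral_nonneg_eq_0_iff_AE[OF gi nn] by simp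
    then have "AE v in (lborel::'a measure). False" using gp by (auto elim!: AE_mp simp: less_le)
    then have "ae_filter (lborel::'a measure) = bot" using trivial_limit_def by blast
    then have "emeasure lborel (space (lborel::'a measure)) = 0" by (simp only: ae_filter_eq_bot_iff)
    then show False by simp
  qed
  moreover have "integral\<^sup>L lborel ?g \<ge> 0" using gp by (intro integral_nonneg_AE) (auto intro!: AE_I2 less_imp_le)
  ultimately have "integral\<^sup>L lborel ?g > 0" by simp
  moreover have "integral\<^sup>L lborel ?g = integral\<^sup>L (lborel::'a measure) (finf k) - (\<integral>v. (finf k v)^3 \<partial>(lborel::'a measure))"
    using Bochner_Integration.integral_diff[OF finf_int[OF k, where 'a='a] finf3_int[OF k, where 'a='a]] by simp
  ultimately show ?thesis unfolding rho_def by simp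
qed

lemma rho_pos: "k > 0 \<Longrightarrow> rho k TYPE('a::euclidean_space) > 0"
proof -
  assume k: "k > 0"
  have "(\<integral>v. (finf k v)^3 \<partial>(lborel :: 'a::euclidean_space measure)) \<ge> 0"
    using finf_pos[OF k] by (intro integral_nonneg_AE) (auto intro!: AE_I2 less_imp_le)
  then show ?thesis using rho_gt[OF k, where 'a='a] by simp
qed

lemma L2_prod:
  fixes f g :: "'a \<Rightarrow> real"
  assumes [measurable]: "f \<in> borel_measurable M" "g \<in> borel_measurable M"
    and "integrable M (\<lambda>x. (f x)\<^sup>2)" "integrable M (\<lambda>x. (g x)\<^sup>2)"
  shows "integrable M (\<lambda>x. f x * g x)"
proof (rule Bochner_Integration.integrable_bound[of M "\<lambda>x. (f x)\<^sup>2 + (g x)\<^sup>2"])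
  show "integrable M (\<lambda>x. (f x)\<^sup>2 + (g x)\<^sup>2)" using assms by auto
  show "AE x in M. norm (f x * g x) \<le> norm ((f x)\<^sup>2 + (g x)\<^sup>2)"
  proof (rule AE_I2)
    fix x
    have "2 * \<bar>f x\<bar> * \<bar>g x\<bar> \<le> (f x)\<^sup>2 + (g x)\<^sup>2"
      using sum_squares_bound[of "\<bar>f x\<bar>" "\<bar>g x\<bar>"] by simp
    moreover have "0 \<le> \<bar>f x\<bar> * \<bar>g x\<bar>" by simp
    moreover have "norm (f x * g x) = \<bar>f x\<bar> * \<bar>g x\<bar>" by (simp add: abs_mult)
    moreover have "norm ((f x)\<^sup>2 + (g x)\<^sup>2) = (f x)\<^sup>2 + (g x)\<^sup>2" by simp
    ultimately show "norm (f x * g x) \<le> norm ((f x)\<^sup>2 + (g x)\<^sup>2)"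
      by linarith
  qed
qed simp

lemma CS:
  fixes a b :: "'a \<Rightarrow> real"
  assumes "integrable M (\<lambda>x. (a x)\<^sup>2)" "integrable M (\<lambda>x. (b x)\<^sup>2)" "integrable M (\<lambda>x. a x * b x)"
  shows "(\<integral>x. a x * b x \<partial>M)\<^sup>2 \<le> (\<integral>x. (a x)\<^sup>2 \<partial>M) * (\<integral>x. (b x)\<^sup>2 \<partial>M)"
proof -
  define A where "A = (\<integral>x. (a x)\<^sup>2 \<partial>M)"
  define B where "B = (\<integral>x. (b x)\<^sup>2 \<partial>M)"
  define C where "C = (\<integral>x. a x * b x \<partial>M)"
  have q: "0 \<le> t\<^sup>2 * A - 2 * t * C + B" for t
  proof -
    have "0 \<le> (\<integral>x. (t * a x - b x)\<^sup>2 \<partial>M)" by simp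
    also have "(\<lambda>x. (t * a x - b x)\<^sup>2) = (\<lambda>x. t\<^sup>2 * (a x)\<^sup>2 - 2 * t * (a x * b x) + (b x)\<^sup>2)"
      by (auto simp: power2_eq_square algebra_simps)
    also have "(\<integral>x. t\<^sup>2 * (a x)\<^sup>2 - 2 * t * (a x * b x) + (b x)\<^sup>2 \<partial>M) = t\<^sup>2 * A - 2 * t * C + B"
      using assms unfolding A_def B_def C_def by (simp add: Bochner_Integration.integral_diff Bochner_Integration.integral_add)
    finally show ?thesis .
  qed
  have A0: "A \<ge> 0" unfolding A_def by simp
  show ?thesis
  proof (cases "A = 0")
    case True
    have "C = 0"
    proof (rule ccontr)
      assume "C \<noteq> 0"
      have "0 \<le> ((B+1) / (2*C))\<^sup>2 * A - 2 * ((B+1) / (2*C)) * C + B" by (rule q)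
      then show False using True \<open>C \<noteq> 0\<close> by simp
    qed
    then show ?thesis using True A_def B_def C_def by simp
  next
    case False
    then have Ap: "A > 0" using A0 by simp
    have "0 \<le> (C/A)\<^sup>2 * A - 2 * (C/A) * C + B" using q .
    then have "0 \<le> B - C\<^sup>2 / A" using Ap by (simp add: power2_eq_square field_simps)
    then have "C\<^sup>2 \<le> A * B" using Ap by (simp add: field_simps)
    then show ?thesis unfolding A_def B_def C_def .
  qed
qed


lemma ptw_null:
  fixes kappa kinf r s m A :: real
  assumes "kappa > 0" "kinf > 0" "r > 0" "s > 0" "m > 0" "s^2 = m"
    and "(1/kappa) * A * s - r / (kappa * kinf) * (1 + kinf * m) * h = 0"
  shows "h = (A / r) * (kinf * s / (1 + kinf * m))"
proof -
  define d where "d = 1 + kinf * m"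
  have d: "d > 0" using assms unfolding d_def by (simp add: add_pos_pos)
  from assms(7) have "(1/kappa) * A * s - r / (kappa * kinf) * d * h = 0" unfolding d_def .
  then have "A * kinf * s = r * d * h" using assms d by (simp add: field_simps)
  then have "h = (A / r) * (kinf * s / d)" using assms d by (simp add: field_simps)
  then show ?thesis unfolding d_def .
qed

lemma ptw_null2:
  fixes kappa kinf r s m c :: real
  assumes "kappa > 0" "kinf > 0" "r > 0" "s > 0" "m > 0" "s^2 = m"
  shows "(1/kappa) * (c * r) * s - r / (kappa * kinf) * (1 + kinf * m) * (c * (kinf * s / (1 + kinf * m))) = 0"
proof -
  define d where "d = 1 + kinf * m"
  have d: "d > 0" using assms unfolding d_def by (simp add: add_pos_pos)
  have "(1/kappa) * (c * r) * s - r / (kappa * kinf) * d * (c * (kinf * s / d)) = 0"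
    using assms d by (simp add: field_simps)
  then show ?thesis unfolding d_def .
qed

lemma ptw_split:
  fixes kinf s m :: real
  assumes "kinf > 0" "s > 0" "m > 0" "s^2 = m"
  shows "s = s * (kinf * m / (1 + kinf * m)) + (1/kinf) * (kinf * s / (1 + kinf * m))"
proof -
  define d where "d = 1 + kinf * m"
  have d: "d > 0" using assms unfolding d_def by (simp add: add_pos_pos)
  have km: "kinf * m = d - 1" unfolding d_def by simp
  have "s = s * ((d - 1) / d) + (1/kinf) * (kinf * s / d)"
    using assms d by (simp add: field_simps)
  then show ?thesis unfolding km[symmetric] unfolding d_def .
qed

lemma ptw_b2:
  fixes kappa kinf r s m :: real
  assumes "kappa > 0" "kinf > 0" "r > 0" "s > 0" "m > 0" "s^2 = m"
  shows "(s * (kinf * m / (1 + kinf * m)))\<^sup>2 / (r / (kappa * kinf) * (1 + kinf * m))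
     = kappa / r * (kinf * m / (1 + kinf * m))^3"
proof -
  define d where "d = 1 + kinf * m"
  have d: "d > 0" using assms unfolding d_def by (simp add: add_pos_pos)
  have "(s * (kinf * m / d))\<^sup>2 / (r / (kappa * kinf) * d) = kappa / r * (kinf * m / d)^3"
    using assms d by (simp add: field_simps power2_eq_square power3_eq_cube)
  then show ?thesis unfolding d_def .
qed


theorem mainTheorem7:
  fixes kappa kinf :: real
  assumes "kappa > 0" and "kinf > 0"
  shows "{h \<in> (L2v :: ('a::euclidean_space \<Rightarrow> real) set).
            AE v in lborel. Lop kappa kinf h v = 0}
         = {h \<in> L2v. \<exists>c. AE v in lborel. h v = c * (finf kinf v / Msqrt v)}
       \<and> (\<integral>v. (finf kinf v)^3 \<partial>(lborel :: 'a measure)) < rho kinf TYPE('a)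
       \<and> (\<forall>h \<in> (L2v :: ('a \<Rightarrow> real) set).
            (\<integral>v. h v * (finf kinf v / Msqrt v) \<partial>lborel) = 0 \<longrightarrow>
            (\<integral>v. Lop kappa kinf h v * h v \<partial>lborel)
              \<le> - (1 - (1 / rho kinf TYPE('a)) * (\<integral>v. (finf kinf v)^3 \<partial>(lborel :: 'a measure)))
                  * (\<integral>v. (h v)\<^sup>2 * nu kappa kinf v \<partial>lborel))
       \<and> (\<forall>h \<in> (L2v :: ('a \<Rightarrow> real) set).
            (\<integral>v. h v * (finf kinf v / Msqrt v) \<partial>lborel) = 0 \<longrightarrow>
            (\<integral>v. Lop kappa kinf h v * h v \<partial>lborel)
              \<le> - (rho kinf TYPE('a) / (kappa * kinf))
                  * (1 - (1 / rho kinf TYPE('a)) * (\<integral>v. (finf kinf v)^3 \<partial>(lborel :: 'a measure)))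
                  * (\<integral>v. (h v)\<^sup>2 \<partial>lborel))"
proof -
  note k = assms(1) and ki = assms(2)
  define r where "r = rho kinf TYPE('a)"
  define F3 where "F3 = (\<integral>v. (finf kinf v)^3 \<partial>(lborel :: 'a measure))"
  have r: "r > 0" unfolding r_def by (rule rho_pos[OF ki])
  have F3r: "F3 < r" unfolding r_def F3_def by (rule rho_gt[OF ki])
  have rint: "(\<integral>v. finf kinf v \<partial>(lborel :: 'a measure)) = r" unfolding r_def rho_def ..
  have nu_eq: "nu kappa kinf v = r / (kappa * kinf) * (1 + kinf * Maxw v)" for v :: 'a
    unfolding nu_def r_def ..
  have nu_pos: "nu kappa kinf v > 0" for v :: 'a
    unfolding nu_eq using r k ki Maxw_pos[of v] by (simp add: add_pos_pos)
  have nu_lb: "nu kappa kinf v \<ge> r / (kappa * kinf)" for v :: 'a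
  proof -
    have "r / (kappa * kinf) * 1 \<le> r / (kappa * kinf) * (1 + kinf * Maxw v)"
      using r k ki Maxw_pos[of v] by (intro mult_left_mono) auto
    then show ?thesis unfolding nu_eq by simp
  qed
  have nu_ub: "nu kappa kinf v \<le> r / (kappa * kinf) * (1 + kinf)" for v :: 'a
    unfolding nu_eq using r k ki Maxw_le1[of v] by (intro mult_left_mono) auto
  have finf_eq: "finf kinf v = kinf * Maxw v / (1 + kinf * Maxw v)" for v :: 'a
    unfolding finf_def ..
  have Ms2: "integrable lborel (\<lambda>v::'a. (Msqrt v)\<^sup>2)"
    unfolding Msqrt_sq by (rule Maxw_int)
  have L2: "h \<in> borel_measurable lborel" "integrable lborel (\<lambda>v. (h v)\<^sup>2)" if "h \<in> L2v" for h :: "'a \<Rightarrow> real"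
    using that unfolding L2v_def by auto
  have hM: "integrable lborel (\<lambda>v. h v * Msqrt v)" if "h \<in> L2v" for h :: "'a \<Rightarrow> real"
    using L2[OF that] Ms2 by (intro L2_prod) auto
  have hnu: "integrable lborel (\<lambda>v. (h v)\<^sup>2 * nu kappa kinf v)" if "h \<in> L2v" for h :: "'a \<Rightarrow> real"
  proof (rule Bochner_Integration.integrable_bound[OF integrable_mult_left[OF L2(2)[OF that], of "r / (kappa * kinf) * (1 + kinf)"]])
    show "(\<lambda>v. (h v)\<^sup>2 * nu kappa kinf v) \<in> borel_measurable lborel" using L2[OF that] by measurable
    show "AE x in lborel. norm ((h x)\<^sup>2 * nu kappa kinf x) \<le> norm ((h x)\<^sup>2 * (r / (kappa * kinf) * (1 + kinf)))"
    proof (rule AE_I2)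
      fix x
      have "(h x)\<^sup>2 * nu kappa kinf x \<le> (h x)\<^sup>2 * (r / (kappa * kinf) * (1 + kinf))"
        using nu_ub[of x] by (intro mult_left_mono) auto
      then show "norm ((h x)\<^sup>2 * nu kappa kinf x) \<le> norm ((h x)\<^sup>2 * (r / (kappa * kinf) * (1 + kinf)))"
        using nu_pos[of x] r k ki by (simp add: abs_mult)
    qed
  qed
  have quad: "(\<integral>v. Lop kappa kinf h v * h v \<partial>lborel)
      = (1/kappa) * (\<integral>v. h v * Msqrt v \<partial>lborel)\<^sup>2 - (\<integral>v. (h v)\<^sup>2 * nu kappa kinf v \<partial>lborel)"
    if h: "h \<in> L2v" for h :: "'a \<Rightarrow> real"
  proof -
    define A where "A = (\<integral>v. h v * Msqrt v \<partial>lborel)"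
    have "(\<lambda>v. Lop kappa kinf h v * h v) = (\<lambda>v. ((1/kappa) * A) * (h v * Msqrt v) - (h v)\<^sup>2 * nu kappa kinf v)"
      unfolding Lop_def A_def by (auto simp: power2_eq_square algebra_simps)
    then have "(\<integral>v. Lop kappa kinf h v * h v \<partial>lborel) = (\<integral>v. ((1/kappa) * A) * (h v * Msqrt v) - (h v)\<^sup>2 * nu kappa kinf v \<partial>lborel)"
      by simp
    also have "\<dots> = (\<integral>v. ((1/kappa) * A) * (h v * Msqrt v) \<partial>lborel) - (\<integral>v. (h v)\<^sup>2 * nu kappa kinf v \<partial>lborel)"
      using hM[OF h] hnu[OF h] by (intro Bochner_Integration.integral_diff) auto
    also have "(\<integral>v. ((1/kappa) * A) * (h v * Msqrt v) \<partial>lborel) = (1/kappa) * A * A"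
      unfolding A_def by simp
    finally show ?thesis unfolding A_def by (simp add: power2_eq_square)
  qed
  have P1: "{h \<in> (L2v :: ('a \<Rightarrow> real) set). AE v in lborel. Lop kappa kinf h v = 0}
         = {h \<in> L2v. \<exists>c. AE v in lborel. h v = c * (finf kinf v / Msqrt v)}"
  proof (rule Collect_cong)
    fix h :: "'a \<Rightarrow> real"
    show "(h \<in> L2v \<and> (AE v in lborel. Lop kappa kinf h v = 0)) \<longleftrightarrow>
          (h \<in> L2v \<and> (\<exists>c. AE v in lborel. h v = c * (finf kinf v / Msqrt v)))"
    proof (intro iffI conjI)
      assume H: "h \<in> L2v \<and> (AE v in lborel. Lop kappa kinf h v = 0)"
      then show "h \<in> L2v" by simp
      define A where "A = (\<integral>v. h v * Msqrt v \<partial>lborel)"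
      have "AE v in lborel. h v = (A / r) * (finf kinf v / Msqrt v)"
        using H[THEN conjunct2]
      proof (rule eventually_mono)
        fix v assume "Lop kappa kinf h v = 0"
        then have "(1/kappa) * A * Msqrt v - r / (kappa * kinf) * (1 + kinf * Maxw v) * h v = 0"
          unfolding Lop_def A_def nu_eq by simp
        then have "h v = (A / r) * (kinf * Msqrt v / (1 + kinf * Maxw v))"
          by (rule ptw_null[OF k ki r Msqrt_pos Maxw_pos Msqrt_sq])
        then show "h v = (A / r) * (finf kinf v / Msqrt v)" unfolding finf_div[OF ki] .
      qed
      then show "\<exists>c. AE v in lborel. h v = c * (finf kinf v / Msqrt v)" by blast
    next
      assume H: "h \<in> L2v \<and> (\<exists>c. AE v in lborel. h v = c * (finf kinf v / Msqrt v))"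
      then have h: "h \<in> L2v" by simp
      from H obtain c where c: "AE v in lborel. h v = c * (finf kinf v / Msqrt v)" by blast
      have "(\<integral>v. h v * Msqrt v \<partial>lborel) = (\<integral>v. c * finf kinf v \<partial>(lborel::'a measure))"
      proof (rule integral_cong_AE)
        show "(\<lambda>v. h v * Msqrt v) \<in> borel_measurable lborel" using L2[OF h] by measurable
        show "(\<lambda>v. c * finf kinf v) \<in> borel_measurable (lborel::'a measure)" by measurable
        show "AE v in lborel. h v * Msqrt v = c * finf kinf v"
          using c
        proof (rule eventually_mono)
          fix v assume "h v = c * (finf kinf v / Msqrt v)"
          then show "h v * Msqrt v = c * finf kinf v" using Msqrt_pos[of v] by simp
        qed
      qed
      also have "\<dots> = c * r" using rint by simp
      finally have A: "(\<integral>v. h v * Msqrt v \<partial>lborel) = c * r" .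
      show "AE v in lborel. Lop kappa kinf h v = 0"
        using c
      proof (rule eventually_mono)
        fix v assume hv: "h v = c * (finf kinf v / Msqrt v)"
        have "Lop kappa kinf h v = (1/kappa) * (c * r) * Msqrt v - r / (kappa * kinf) * (1 + kinf * Maxw v) * (c * (kinf * Msqrt v / (1 + kinf * Maxw v)))"
          unfolding Lop_def A nu_eq hv finf_div[OF ki] by simp
        also have "\<dots> = 0" by (rule ptw_null2[OF k ki r Msqrt_pos Maxw_pos Msqrt_sq])
        finally show "Lop kappa kinf h v = 0" .
      qed
      show "h \<in> L2v" by (rule h)
    qed
  qed
  have P3: "(\<integral>v. Lop kappa kinf h v * h v \<partial>lborel) \<le> - (1 - (1 / r) * F3) * (\<integral>v. (h v)\<^sup>2 * nu kappa kinf v \<partial>lborel)"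
    if h: "h \<in> L2v" and orth: "(\<integral>v. h v * (finf kinf v / Msqrt v) \<partial>lborel) = 0" for h :: "'a \<Rightarrow> real"
  proof -
    note [measurable] = L2(1)[OF h]
    define a where "a v = sqrt (nu kappa kinf v) * h v" for v :: 'a
    define b where "b v = Msqrt v * finf kinf v / sqrt (nu kappa kinf v)" for v :: 'a
    have a2: "(a v)\<^sup>2 = (h v)\<^sup>2 * nu kappa kinf v" for v
      unfolding a_def using nu_pos[of v] by (simp add: power_mult_distrib)
    have b2: "(b v)\<^sup>2 = kappa / r * (finf kinf v)^3" for v
    proof -
      have "(b v)\<^sup>2 = (Msqrt v * finf kinf v)\<^sup>2 / nu kappa kinf v"
        unfolding b_def using nu_pos[of v] by (simp add: power_divide)
      also have "\<dots> = kappa / r * (finf kinf v)^3"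
        unfolding nu_eq finf_eq by (rule ptw_b2[OF k ki r Msqrt_pos Maxw_pos Msqrt_sq])
      finally show ?thesis .
    qed
    have ab: "a v * b v = h v * Msqrt v * finf kinf v" for v
      unfolding a_def b_def using nu_pos[of v] by (simp add: field_simps)
    have [measurable]: "a \<in> borel_measurable lborel" unfolding a_def[abs_def] by measurable
    have [measurable]: "b \<in> borel_measurable lborel" unfolding b_def[abs_def] by measurable
    have ia2: "integrable lborel (\<lambda>v. (a v)\<^sup>2)" unfolding a2 by (rule hnu[OF h])
    have ib2: "integrable lborel (\<lambda>v. (b v)\<^sup>2)" unfolding b2 by (rule integrable_mult_right[OF finf3_int[OF ki]])
    have iab: "integrable lborel (\<lambda>v. a v * b v)" using ia2 ib2 by (intro L2_prod) auto
    have cs: "(\<integral>v. a v * b v \<partial>lborel)\<^sup>2 \<le> (\<integral>v. (a v)\<^sup>2 \<partial>lborel) * (\<integral>v. (b v)\<^sup>2 \<partial>lborel)"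
      by (rule CS[OF ia2 ib2 iab])
    define X where "X = (\<integral>v. (h v)\<^sup>2 * nu kappa kinf v \<partial>lborel)"
    have X0: "X \<ge> 0" unfolding X_def by (intro integral_nonneg_AE AE_I2 mult_nonneg_nonneg zero_le_power2 less_imp_le[OF nu_pos])
    have B2: "(\<integral>v. (b v)\<^sup>2 \<partial>lborel) = kappa / r * F3" unfolding b2 F3_def by simp
    have split: "h v * Msqrt v = a v * b v + (1/kinf) * (h v * (finf kinf v / Msqrt v))" for v
    proof -
      have "Msqrt v = Msqrt v * finf kinf v + (1/kinf) * (finf kinf v / Msqrt v)"
        unfolding finf_div[OF ki] unfolding finf_eq by (rule ptw_split[OF ki Msqrt_pos Maxw_pos Msqrt_sq])
      then have "h v * Msqrt v = h v * (Msqrt v * finf kinf v + (1/kinf) * (finf kinf v / Msqrt v))"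
        by (rule arg_cong[where f="\<lambda>x. h v * x"])
      also have "\<dots> = h v * Msqrt v * finf kinf v + (1/kinf) * (h v * (finf kinf v / Msqrt v))"
        by (simp add: algebra_simps)
      finally show ?thesis unfolding ab .
    qed
    have iorth: "integrable lborel (\<lambda>v. (1/kinf) * (h v * (finf kinf v / Msqrt v)))"
    proof -
      have "(\<lambda>v. (1/kinf) * (h v * (finf kinf v / Msqrt v))) = (\<lambda>v. h v * Msqrt v - a v * b v)"
        using split by (auto simp: fun_eq_iff)
      then show ?thesis using hM[OF h] iab by simp
    qed
    have Aeq: "(\<integral>v. h v * Msqrt v \<partial>lborel) = (\<integral>v. a v * b v \<partial>lborel)"
    proof -
      have "(\<integral>v. h v * Msqrt v \<partial>lborel) = (\<integral>v. a v * b v + (1/kinf) * (h v * (finf kinf v / Msqrt v)) \<partial>lborel)"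
        unfolding split ..
      also have "\<dots> = (\<integral>v. a v * b v \<partial>lborel) + (\<integral>v. (1/kinf) * (h v * (finf kinf v / Msqrt v)) \<partial>lborel)"
        using iab iorth by (rule Bochner_Integration.integral_add)
      also have "(\<integral>v. (1/kinf) * (h v * (finf kinf v / Msqrt v)) \<partial>lborel) = 0"
        unfolding integral_mult_right_zero orth by simp
      finally show ?thesis by simp
    qed
    have "(\<integral>v. h v * Msqrt v \<partial>lborel)\<^sup>2 \<le> X * (kappa / r * F3)"
      using cs unfolding Aeq B2 unfolding a2 X_def .
    then have "(1/kappa) * (\<integral>v. h v * Msqrt v \<partial>lborel)\<^sup>2 \<le> (1/kappa) * (X * (kappa / r * F3))"
      using k by (intro mult_left_mono) auto
    also have "\<dots> = X * F3 / r" using k by simp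
    finally have "(1/kappa) * (\<integral>v. h v * Msqrt v \<partial>lborel)\<^sup>2 \<le> X * F3 / r" .
    then show ?thesis unfolding quad[OF h] X_def[symmetric] by (simp add: algebra_simps)
  qed
  have P4: "(\<integral>v. Lop kappa kinf h v * h v \<partial>lborel) \<le> - (r / (kappa * kinf)) * (1 - (1 / r) * F3) * (\<integral>v. (h v)\<^sup>2 \<partial>lborel)"
    if h: "h \<in> L2v" and orth: "(\<integral>v. h v * (finf kinf v / Msqrt v) \<partial>lborel) = 0" for h :: "'a \<Rightarrow> real"
  proof -
    have c: "1 - (1 / r) * F3 > 0" using F3r r by (simp add: field_simps)
    have "r / (kappa * kinf) * (\<integral>v. (h v)\<^sup>2 \<partial>lborel) = (\<integral>v. (h v)\<^sup>2 * (r / (kappa * kinf)) \<partial>lborel)"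
      by simp
    also have "\<dots> \<le> (\<integral>v. (h v)\<^sup>2 * nu kappa kinf v \<partial>lborel)"
      by (intro integral_mono[OF integrable_mult_left[OF L2(2)[OF h]] hnu[OF h]] mult_left_mono nu_lb zero_le_power2)
    finally have "(1 - (1 / r) * F3) * (r / (kappa * kinf) * (\<integral>v. (h v)\<^sup>2 \<partial>lborel))
        \<le> (1 - (1 / r) * F3) * (\<integral>v. (h v)\<^sup>2 * nu kappa kinf v \<partial>lborel)"
      using c by (intro mult_left_mono) auto
    moreover note P3[OF h orth]
    moreover have "- (r / (kappa * kinf)) * (1 - (1 / r) * F3) * (\<integral>v. (h v)\<^sup>2 \<partial>lborel)
       = - ((1 - (1 / r) * F3) * (r / (kappa * kinf) * (\<integral>v. (h v)\<^sup>2 \<partial>lborel)))"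
      by (simp only: mult_ac minus_mult_left)
    ultimately show ?thesis by linarith
  qed
  show ?thesis
    using P1 P3 P4 F3r unfolding r_def F3_def by blast
qed
end
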